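(* With $0<q<1$, $p=1-q$, $Q=1/q$, $L=\log Q$, let \[ c_2(q)=-\frac{p}{qL}\sum_{l\ge1}\frac{1}{Q^l-1}+\frac pq\sum_{l\ge1}\frac{lQ^l}{(Q^l-1)^2}+\frac1L-\frac1p-\frac qp. \] Then, as $q\to1^-$, \[ c_2(q)=\frac14+\frac19\log q+O(\log^2 q); \] in particular $c_2(q)\to\frac14$. *)

theory Defs
  imports "HOL-Analysis.Analysis" "HOL-Library.Landau_Symbols"
begin

definition c2 :: "real \<Rightarrow> real" where
  "c2 q = (let p = 1 - q; Q = 1 / q; L = ln Q in
      - (p / (q * L)) * (\<Sum>l. 1 / (Q ^ Suc l - 1))
      + (p / q) * (\<Sum>l. real (Suc l) * Q ^ Suc l / (Q ^ Suc l - 1)\<^sup>2)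
      + 1 / L - 1 / p - q / p)"

end

theory Submission
  imports Defs "HOL-Real_Asymp.Real_Asymp" "HOL-Library.Landau_Symbols"
begin
definition uu :: "real \<Rightarrow> real" where "uu t = 1 / (exp t - 1)"
definition U1 :: "real \<Rightarrow> real" where "U1 v = -(v + v^2)"
definition U2 :: "real \<Rightarrow> real" where "U2 v = v + 3* v^2 + 2* v^3"
definition U3 :: "real \<Rightarrow> real" where "U3 v = -(v + 7* v^2 + 12* v^3 + 6* v^4)"
definition U4 :: "real \<Rightarrow> real" where "U4 v = v + 15* v^2 + 50* v^3 + 60* v^4 + 24* v^5"
definition ps0 :: "real \<Rightarrow> real" where "ps0 t = t * uu t"
definition ps1 :: "real \<Rightarrow> real" where "ps1 t = uu t + t * U1 (uu t)"
definition ps2 :: "real \<Rightarrow> real" where "ps2 t = 2 * U1 (uu t) + t * U2 (uu t)"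
definition ps3 :: "real \<Rightarrow> real" where "ps3 t = 3 * U2 (uu t) + t * U3 (uu t)"
definition ps4 :: "real \<Rightarrow> real" where "ps4 t = 4 * U3 (uu t) + t * U4 (uu t)"

lemma d_uu: assumes "t > 0" shows "(uu has_real_derivative (-(uu t + (uu t)^2))) (at t)"
proof -
  have ne: "exp t - 1 \<noteq> 0" using assms by simp
  have "((\<lambda>t. 1 / (exp t - 1)) has_real_derivative (- (exp t) / (exp t - 1)^2)) (at t)"
    by (rule derivative_eq_intros refl | use ne in \<open>simp add: power2_eq_square\<close>)+
  moreover have "- (exp t) / (exp t - 1)^2 = -(uu t + (uu t)^2)"
  proof -
    have "\<And>e::real. e - 1 \<noteq> 0 \<Longrightarrow> - e / (e - 1)^2 = -(1/(e-1) + (1/(e-1))^2)"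
      by (simp add: divide_simps) (simp add: algebra_simps power2_eq_square)
    thus ?thesis using ne by (simp add: uu_def)
  qed
  ultimately show ?thesis unfolding uu_def[abs_def] by simp
qed

lemma d_ps0: "t > 0 \<Longrightarrow> (ps0 has_real_derivative ps1 t) (at t)"
  unfolding ps0_def[abs_def] ps1_def U1_def
  by (rule derivative_eq_intros d_uu refl | simp add: algebra_simps)+

lemma d_ps1: "t > 0 \<Longrightarrow> (ps1 has_real_derivative ps2 t) (at t)"
  unfolding ps1_def[abs_def] ps2_def U1_def U2_def
  by (rule derivative_eq_intros d_uu refl | simp add: algebra_simps eval_nat_numeral)+
lemma d_ps2: "t > 0 \<Longrightarrow> (ps2 has_real_derivative ps3 t) (at t)"
  unfolding ps2_def[abs_def] ps3_def U1_def U2_def U3_def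
  by (rule derivative_eq_intros d_uu refl | simp add: algebra_simps eval_nat_numeral)+
lemma d_ps3: "t > 0 \<Longrightarrow> (ps3 has_real_derivative ps4 t) (at t)"
  unfolding ps3_def[abs_def] ps4_def U2_def U3_def U4_def
  by (rule derivative_eq_intros d_uu refl | simp add: algebra_simps eval_nat_numeral)+

lemma ps4_lim0: "((\<lambda>t. ps4 t * exp (t/2)) \<longlongrightarrow> -1/30) (at_right 0)"
  unfolding ps4_def U3_def U4_def uu_def by real_asymp
lemma ps4_limtop: "((\<lambda>t. ps4 t * exp (t/2)) \<longlongrightarrow> 0) at_top"
  unfolding ps4_def U3_def U4_def uu_def by real_asymp
lemma ps0_limtop: "(ps0 \<longlongrightarrow> 0) at_top"
  unfolding ps0_def uu_def by real_asymp
lemma ps2_limtop: "(ps2 \<longlongrightarrow> 0) at_top"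
  unfolding ps2_def U1_def U2_def uu_def by real_asymp
lemma seq_top: "(L::real) > 0 \<Longrightarrow> filterlim (\<lambda>n. (real n + 1) * L) at_top sequentially"
  by real_asymp

lemma ps4_bound: "\<exists>C. \<forall>t>0. \<bar>ps4 t\<bar> \<le> C * exp (-t/2)"
proof -
  define f where "f = (\<lambda>t. ps4 t * exp (t/2))"
  have "eventually (\<lambda>t. f t < 0) (at_right 0)" "eventually (\<lambda>t. -1 < f t) (at_right 0)"
    using order_tendstoD(2)[OF ps4_lim0, of 0] order_tendstoD(1)[OF ps4_lim0, of "-1"] unfolding f_def by auto
  then have "eventually (\<lambda>t. \<bar>f t\<bar> \<le> 1) (at_right 0)"
    by eventually_elim auto
  then obtain d where d: "d > 0" "\<And>t. 0 < t \<Longrightarrow> t < d \<Longrightarrow> \<bar>f t\<bar> \<le> 1"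
    unfolding eventually_at_right_field by auto
  have "eventually (\<lambda>t. f t < 1) at_top" "eventually (\<lambda>t. -1 < f t) at_top"
    using order_tendstoD(2)[OF ps4_limtop, of 1] order_tendstoD(1)[OF ps4_limtop, of "-1"] unfolding f_def by auto
  then have "eventually (\<lambda>t. \<bar>f t\<bar> \<le> 1) at_top"
    by eventually_elim auto
  then obtain T where T: "\<And>t. t \<ge> T \<Longrightarrow> \<bar>f t\<bar> \<le> 1"
    unfolding eventually_at_top_linorder by auto
  have cont: "continuous_on {d..T} f"
    unfolding f_def ps4_def U3_def U4_def uu_def
    using d(1) by (intro continuous_intros) auto
  have "bounded (f ` {d..T})"
    by (rule compact_imp_bounded[OF compact_continuous_image[OF cont compact_Icc]])
  then obtain B where B: "\<And>t. t \<in> {d..T} \<Longrightarrow> \<bar>f t\<bar> \<le> B"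
    unfolding bounded_iff by fastforce
  have fb: "\<bar>f t\<bar> \<le> max 1 B" if "t > 0" for t
  proof (cases "t < d")
    case True then show ?thesis using d(2)[OF that] by simp
  next
    case False
    show ?thesis
    proof (cases "t \<le> T")
      case True then show ?thesis using B[of t] False by simp
    next
      case False then show ?thesis using T[of t] by simp
    qed
  qed
  have "\<bar>ps4 t\<bar> \<le> max 1 B * exp (-t/2)" if "t > 0" for t
  proof -
    have "ps4 t = f t * exp (-t/2)" unfolding f_def by (simp add: mult.assoc exp_add[symmetric])
    then have "\<bar>ps4 t\<bar> = \<bar>f t\<bar> * exp (-t/2)" by (simp add: abs_mult)
    also have "\<dots> \<le> max 1 B * exp (-t/2)" using fb[OF that] by (intro mult_right_mono) auto
    finally show ?thesis .
  qed
  then show ?thesis by blast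
qed

fun psd :: "nat \<Rightarrow> real \<Rightarrow> real" where
  "psd 0 = ps0" | "psd (Suc 0) = ps1" | "psd (Suc (Suc 0)) = ps2" | "psd (Suc (Suc (Suc 0))) = ps3"
| "psd _ = ps4"

lemma psd_deriv: "m < 4 \<Longrightarrow> t > 0 \<Longrightarrow> DERIV (psd m) t :> psd (Suc m) t"
proof -
  assume "m < 4" "t > 0"
  then have "m = 0 \<or> m = 1 \<or> m = 2 \<or> m = 3" by arith
  then show ?thesis using \<open>t > 0\<close>
    by (auto simp: eval_nat_numeral d_ps0 d_ps1 d_ps2 d_ps3)
qed

lemma R_bound:
  assumes C: "\<forall>t>0. \<bar>ps4 t\<bar> \<le> C * exp (-t/2)" and x: "x > 0" and h: "h > 0"
  shows "\<bar>ps0 (x+h) - ps0 x - (h/2)*(ps1 x + ps1 (x+h)) + (h^2/12)*(ps2 (x+h) - ps2 x)\<bar>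
           \<le> C * exp (-x/2) * h^4 / 6"
proof -
  define M where "M = C * exp (-x/2)"
  have Mb: "\<bar>ps4 t\<bar> \<le> M" if "t > x" for t
  proof -
    have "\<bar>ps4 t\<bar> \<le> C * exp (-t/2)" by (rule C[rule_format]) (use that x in linarith)
    also have "\<dots> \<le> M" unfolding M_def
    proof (rule mult_left_mono)
      show "exp (-t/2) \<le> exp (-x/2)" using that by simp
      have "0 \<le> C * exp (-1/2)" using C[rule_format, of 1] by (meson abs_ge_zero order_trans zero_less_one)
      then show "0 \<le> C" by (simp add: zero_le_mult_iff)
    qed
    finally show ?thesis .
  qed
  have nlt: "\<not> (x + h < x)" using h by simp
  have D0: "\<forall>m t. m < 4 \<and> x \<le> t \<and> t \<le> x+h \<longrightarrow> DERIV (psd m) t :> psd (Suc m) t"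
    using psd_deriv x by auto
  have D1: "\<forall>m t. m < 3 \<and> x \<le> t \<and> t \<le> x+h \<longrightarrow> DERIV (psd (Suc m)) t :> psd (Suc (Suc m)) t"
    using psd_deriv x by auto
  have D2: "\<forall>m t. m < 2 \<and> x \<le> t \<and> t \<le> x+h \<longrightarrow> DERIV (psd (Suc (Suc m))) t :> psd (Suc (Suc (Suc m))) t"
    using psd_deriv x by auto
  have T0: "\<exists>t. (if x + h < x then x + h < t \<and> t < x else x < t \<and> t < x + h) \<and>
     ps0 (x + h) = (\<Sum>m<4. psd m x / fact m * (x + h - x) ^ m) + psd 4 t / fact 4 * (x + h - x) ^ 4"
    by (rule Taylor[OF _ _ D0]) (use h in auto)
  then obtain t0 where t0: "x < t0" and e0: "ps0 (x + h) = (\<Sum>m<4. psd m x / fact m * (x + h - x) ^ m) + psd 4 t0 / fact 4 * (x + h - x) ^ 4"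
    unfolding if_not_P[OF nlt] by blast
  have T1: "\<exists>t. (if x + h < x then x + h < t \<and> t < x else x < t \<and> t < x + h) \<and>
     ps1 (x + h) = (\<Sum>m<3. psd (Suc m) x / fact m * (x + h - x) ^ m) + psd (Suc 3) t / fact 3 * (x + h - x) ^ 3"
    by (rule Taylor[OF _ _ D1]) (use h in auto)
  then obtain t1 where t1: "x < t1" and e1: "ps1 (x + h) = (\<Sum>m<3. psd (Suc m) x / fact m * (x + h - x) ^ m) + psd (Suc 3) t1 / fact 3 * (x + h - x) ^ 3"
    unfolding if_not_P[OF nlt] by blast
  have T2: "\<exists>t. (if x + h < x then x + h < t \<and> t < x else x < t \<and> t < x + h) \<and>
     ps2 (x + h) = (\<Sum>m<2. psd (Suc (Suc m)) x / fact m * (x + h - x) ^ m) + psd (Suc (Suc 2)) t / fact 2 * (x + h - x) ^ 2"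
    by (rule Taylor[OF _ _ D2]) (use h in auto)
  then obtain t2 where t2: "x < t2" and e2: "ps2 (x + h) = (\<Sum>m<2. psd (Suc (Suc m)) x / fact m * (x + h - x) ^ m) + psd (Suc (Suc 2)) t2 / fact 2 * (x + h - x) ^ 2"
    unfolding if_not_P[OF nlt] by blast
  have e0': "ps0 (x+h) = ps0 x + ps1 x * h + ps2 x * h^2/2 + ps3 x * h^3/6 + ps4 t0 * h^4/24"
    using e0 by (simp add: eval_nat_numeral fact_numeral)
  have e1': "ps1 (x+h) = ps1 x + ps2 x * h + ps3 x * h^2/2 + ps4 t1 * h^3/6"
    using e1 by (simp add: eval_nat_numeral fact_numeral)
  have e2': "ps2 (x+h) = ps2 x + ps3 x * h + ps4 t2 * h^2/2"
    using e2 by (simp add: eval_nat_numeral fact_numeral)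
  have "ps0 (x+h) - ps0 x - (h/2)*(ps1 x + ps1 (x+h)) + (h^2/12)*(ps2 (x+h) - ps2 x)
        = h^4 * (ps4 t0 / 24 - ps4 t1 / 12 + ps4 t2 / 24)"
    unfolding e0' e1' e2' by (simp add: field_simps power2_eq_square power3_eq_cube power4_eq_xxxx)
  also have "\<bar>\<dots>\<bar> \<le> h^4 * (M/24 + M/12 + M/24)"
  proof -
    have "\<bar>ps4 t0 / 24 - ps4 t1 / 12 + ps4 t2 / 24\<bar> \<le> M/24 + M/12 + M/24"
      using Mb[OF t0] Mb[OF t1] Mb[OF t2] unfolding abs_le_iff by linarith
    then show ?thesis unfolding abs_mult using h by (simp add: mult_left_mono)
  qed
  finally show ?thesis by (simp add: M_def mult_ac)
qed

definition Eapp :: "real \<Rightarrow> real" where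
  "Eapp q = (let L = - ln q in -((1-q)/(q*L^2)) * (- ps0 L + (L/2) * ps1 L - (L^2/12) * ps2 L)
            + 1/L - 1/(1-q) - q/(1-q))"

definition Eexp :: "real \<Rightarrow> real" where
  "Eexp q = (let L = - ln q; u = 1/(exp L - 1) in
   -((1-q)/(q*L^2)) * (- (L*u) + (L/2)*(u + L*(-(u+u^2))) - (L^2/12)*(2*(-(u+u^2)) + L*(u+3*u^2+2*u^3)))
   + 1/L - 1/(1-q) - q/(1-q))"

lemma Eapp_Eexp: "Eapp = Eexp"
  unfolding Eapp_def Eexp_def Let_def ps0_def ps1_def ps2_def U1_def U2_def uu_def ..

lemma Eexp_lim: "(Eexp \<longlongrightarrow> 1/4) (at_left 1)"
  unfolding Eexp_def Let_def by real_asymp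

lemma Eexp_bigo: "(\<lambda>q. Eexp q - (1/4 + (1/9) * ln q)) \<in> O[at_left 1](\<lambda>q. (ln q)\<^sup>2)"
  unfolding Eexp_def Let_def by real_asymp

lemma Eapp_bigo: "(\<lambda>q. Eapp q - (1/4 + (1/9) * ln q)) \<in> O[at_left 1](\<lambda>q. (ln q)\<^sup>2)"
  using Eexp_bigo unfolding Eapp_Eexp .

lemma Eapp_lim: "(Eapp \<longlongrightarrow> 1/4) (at_left 1)"
  using Eexp_lim unfolding Eapp_Eexp .

lemma lnsq_lim: "((\<lambda>q::real. (ln q)\<^sup>2) \<longlongrightarrow> 0) (at_left 1)"
  by real_asymp
lemma exp_half_ge: "(x::real) \<ge> 0 \<Longrightarrow> 1 + x/2 \<le> exp (x/2)"
  using exp_ge_add_one_self[of "x/2"] by simp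

lemma aux1: "(e::real) > 0 \<Longrightarrow> a \<noteq> 0 \<Longrightarrow> e / (e*a)^2 = inverse e / a^2"
  by (simp add: power2_eq_square field_simps)

lemma main_decomp:
  fixes q C :: real
  assumes q: "1/2 < q" "q < 1" and C: "\<forall>t>0. \<bar>ps4 t\<bar> \<le> C * exp (-t/2)"
  shows "\<bar>c2 q - Eapp q\<bar> \<le> (2*C/3) * (ln q)\<^sup>2"
proof -
  have q0: "q > 0" using q by simp
  have C0: "0 \<le> C"
  proof -
    have "0 \<le> C * exp (-1/2)" using C[rule_format, of 1] by (meson abs_ge_zero order_trans zero_less_one)
    then show "0 \<le> C" by (simp add: zero_le_mult_iff)
  qed
  define L where "L = - ln q"
  have L: "L > 0" using q q0 by (simp add: L_def)
  have eL: "exp L = 1/q" using q0 by (simp add: L_def exp_minus inverse_eq_divide)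
  have lnQ: "ln (1/q) = L" using q0 by (simp add: L_def ln_div)
  have qL: "1 - q \<le> L" using ln_le_minus_one[OF q0] by (simp add: L_def)
  define t where "t = (\<lambda>n::nat. (real n + 1) * L)"
  have tL: "t n \<ge> L" for n using L by (simp add: t_def)
  have tpos: "t n > 0" for n using tL[of n] L by linarith
  have tSuc: "t (Suc n) = t n + L" for n by (simp add: t_def algebra_simps)
  have et: "(1/q) ^ Suc n = exp (t n)" for n
  proof -
    have "exp (t n) = exp (real (Suc n) * L)" by (simp add: t_def)
    also have "\<dots> = exp L ^ Suc n" by (rule exp_of_nat_mult)
    finally show ?thesis by (simp add: eL)
  qed
  define r where "r = exp (-L/2)"
  have r0: "0 < r" "r < 1" using L by (auto simp: r_def)
  have er: "exp (- t n / 2) = r ^ Suc n" for n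
  proof -
    have "exp (- t n / 2) = exp (real (Suc n) * (-L/2))" by (simp add: t_def algebra_simps)
    also have "\<dots> = r ^ Suc n" unfolding r_def by (rule exp_of_nat_mult)
    finally show ?thesis .
  qed
  have er2: "exp (- (t n / 2)) = r * r ^ n" for n using er[of n] by simp
  have eq1: "exp (t n) * (1 - q) \<le> exp (t n) - 1" for n
  proof -
    have "exp L \<le> exp (t n)" using tL[of n] by simp
    then have "1 \<le> exp (t n) * q" using q0 by (simp add: eL field_simps)
    then show ?thesis by (simp add: algebra_simps)
  qed
  have epos: "exp (t n) * (1 - q) > 0" for n using q by simp
  have uu_eq: "uu (t n) = 1 / (exp (t n) - 1)" for n by (simp add: uu_def)
  have uu_nn: "uu (t n) \<ge> 0" for n using eq1[of n] epos[of n] tpos[of n] by (simp add: uu_def)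
  have uu_bd: "uu (t n) \<le> exp (- t n / 2) / (1 - q)" for n
  proof -
    have "uu (t n) \<le> 1 / (exp (t n) * (1 - q))"
      unfolding uu_eq by (rule divide_left_mono[OF eq1]) (insert epos[of n] eq1[of n] tpos[of n], auto intro!: mult_pos_pos)
    also have "\<dots> = exp (- t n) / (1 - q)" by (simp add: exp_minus field_simps)
    also have "\<dots> \<le> exp (- t n / 2) / (1 - q)"
      using tpos[of n] q by (intro divide_right_mono) auto
    finally show ?thesis .
  qed
  have uu2_eq: "uu (t n) + uu (t n) ^ 2 = exp (t n) / (exp (t n) - 1)^2" for n
  proof -
    have ne: "exp (t n) - 1 \<noteq> 0" using eq1[of n] epos[of n] tpos[of n] by simp
    have "\<And>e::real. e - 1 \<noteq> 0 \<Longrightarrow> e / (e - 1)^2 = 1/(e-1) + (1/(e-1))^2"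
      by (simp add: divide_simps) (simp add: algebra_simps power2_eq_square)
    then show ?thesis using ne by (simp add: uu_def)
  qed
  have uu2_bd: "(real n + 1) * (uu (t n) + uu (t n) ^ 2) \<le> (2 / (L * (1-q)^2)) * r ^ Suc n" for n
  proof -
    have e1: "exp (t n) - 1 \<ge> exp (t n) * (1 - q)" by (rule eq1)
    have "uu (t n) + uu (t n) ^ 2 \<le> exp (t n) / (exp (t n) * (1 - q))^2"
      unfolding uu2_eq
    proof (rule divide_left_mono)
      have p: "0 < exp (t n) * (1 - q)" by (rule epos)
      then show "(exp (t n) * (1 - q))\<^sup>2 \<le> (exp (t n) - 1)\<^sup>2" using e1 by (intro power_mono) auto
      show "0 \<le> exp (t n)" by simp
      have "0 < exp (t n) - 1" using p e1 by linarith
      then show "0 < (exp (t n) - 1)\<^sup>2 * (exp (t n) * (1 - q))\<^sup>2" using p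
        by (intro mult_pos_pos zero_less_power) (use q in auto)
    qed
    also have "\<dots> = exp (- t n) / (1 - q)^2"
      using aux1[of "exp (t n)" "1-q"] q by (simp add: exp_minus)
    finally have a: "uu (t n) + uu (t n) ^ 2 \<le> exp (- t n) / (1 - q)^2" .
    have b: "t n \<le> 2 * exp (t n / 2)" using exp_half_ge[of "t n"] tpos[of n] by linarith
    have eqn: "(real n + 1) = t n / L" using L by (simp add: t_def)
    have "(real n + 1) * (uu (t n) + uu (t n) ^ 2) \<le> (t n / L) * (exp (- t n) / (1 - q)^2)"
      unfolding eqn by (rule mult_left_mono[OF a]) (use tpos[of n] L in simp)
    also have "\<dots> \<le> (2 * exp (t n / 2) / L) * (exp (- t n) / (1 - q)^2)"
      using b L q by (intro mult_right_mono divide_right_mono) auto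
    also have "\<dots> = (2 / (L * (1-q)^2)) * exp (- t n / 2)"
    proof -
      have "exp (t n / 2) * exp (- t n) = exp (- t n / 2)" by (simp add: exp_add[symmetric])
      then show ?thesis by (simp add: field_simps)
    qed
    finally show ?thesis by (simp add: er2)
  qed
  define s1 where "s1 = (\<lambda>n::nat. 1 / ((1/q) ^ Suc n - 1))"
  define s2 where "s2 = (\<lambda>n::nat. real (Suc n) * (1/q) ^ Suc n / ((1/q) ^ Suc n - 1)\<^sup>2)"
  have s1_eq: "s1 n = uu (t n)" for n by (simp only: s1_def et uu_def)
  have s2_eq: "s2 n = (real n + 1) * (uu (t n) + uu (t n) ^ 2)" for n
    by (simp only: s2_def et uu2_eq) simp
  have geo: "summable (\<lambda>n. r ^ Suc n)" using r0 by (simp add: summable_geometric)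
  have sum_s1: "summable s1"
  proof (rule summable_comparison_test[where g = "\<lambda>n. r ^ Suc n / (1 - q)"])
    show "\<exists>N. \<forall>n\<ge>N. norm (s1 n) \<le> r ^ Suc n / (1 - q)"
      using uu_bd uu_nn by (auto simp: s1_eq er2)
    show "summable (\<lambda>n. r ^ Suc n / (1 - q))" using geo by (rule summable_divide)
  qed
  have s2_nn: "s2 n \<ge> 0" for n using uu_nn[of n] by (simp add: s2_eq)
  have sum_s2: "summable s2"
  proof (rule summable_comparison_test[where g = "\<lambda>n. (2 / (L * (1-q)^2)) * r ^ Suc n"])
    show "\<exists>N. \<forall>n\<ge>N. norm (s2 n) \<le> (2 / (L * (1-q)^2)) * r ^ Suc n"
      using uu2_bd s2_nn by (auto simp: s2_eq)
    show "summable (\<lambda>n. (2 / (L * (1-q)^2)) * r ^ Suc n)" using geo by (rule summable_mult)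
  qed
  define A where "A = (\<lambda>n. ps0 (t n))"
  define B where "B = (\<lambda>n. ps1 (t n))"
  define D where "D = (\<lambda>n. ps2 (t n))"
  have B_eq: "B = (\<lambda>n. s1 n - L * s2 n)"
    by (rule ext) (simp add: B_def ps1_def U1_def s1_eq s2_eq t_def algebra_simps)
  have sumB: "summable B" unfolding B_eq using sum_s1 sum_s2
    by (intro summable_diff summable_mult)
  define G where "G = suminf B"
  have G_eq: "G = suminf s1 - L * suminf s2"
    unfolding G_def B_eq
    using suminf_diff[OF sum_s1 summable_mult[OF sum_s2, of L]] suminf_mult[OF sum_s2, of L] by simp
  have A_lim: "A \<longlonglongrightarrow> 0"
    unfolding A_def t_def by (rule filterlim_compose[OF ps0_limtop seq_top[OF L]])
  have D_lim: "D \<longlonglongrightarrow> 0"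
    unfolding D_def t_def by (rule filterlim_compose[OF ps2_limtop seq_top[OF L]])
  define R where "R = (\<lambda>n. ps0 (t n + L) - ps0 (t n) - (L/2)*(ps1 (t n) + ps1 (t n + L))
                        + (L^2/12)*(ps2 (t n + L) - ps2 (t n)))"
  have R_eq: "R = (\<lambda>n. (A (Suc n) - A n) - (L/2) * (B n + B (Suc n)) + (L^2/12) * (D (Suc n) - D n))"
    by (rule ext) (simp add: R_def A_def B_def D_def tSuc)
  have h1: "(\<lambda>n. A (Suc n) - A n) sums (0 - A 0)" by (rule telescope_sums[OF A_lim])
  have h4: "(\<lambda>n. D (Suc n) - D n) sums (0 - D 0)" by (rule telescope_sums[OF D_lim])
  have h2: "B sums G" unfolding G_def using sumB by (rule summable_sums)
  have h3: "(\<lambda>n. B (Suc n)) sums (G - B 0)" unfolding sums_Suc_iff using h2 by simp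
  have hR: "R sums ((0 - A 0) - (L/2) * (G + (G - B 0)) + (L^2/12) * (0 - D 0))"
  proof -
    have X: "(\<lambda>n. (L/2) * (B n + B (Suc n))) sums ((L/2) * (G + (G - B 0)))"
      by (rule sums_mult[OF sums_add[OF h2 h3]])
    have Y: "(\<lambda>n. (L^2/12) * (D (Suc n) - D n)) sums ((L^2/12) * (0 - D 0))"
      by (rule sums_mult[OF h4])
    show ?thesis unfolding R_eq by (rule sums_add[OF sums_diff[OF h1 X] Y])
  qed
  have SR: "suminf R = - A 0 - L * G + (L/2) * B 0 - (L^2/12) * D 0"
    using sums_unique[OF hR] by (simp add: algebra_simps)
  have Rb: "\<bar>R n\<bar> \<le> (C * L^4 / 6) * r ^ Suc n" for n
  proof -
    have "\<bar>R n\<bar> \<le> C * exp (- t n / 2) * L^4 / 6"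
      unfolding R_def by (rule R_bound[OF C tpos L])
    also have "\<dots> = (C * L^4 / 6) * r ^ Suc n" unfolding er by (simp add: field_simps)
    finally show ?thesis .
  qed
  have geo2: "(\<lambda>n. r ^ Suc n) sums (r / (1 - r))"
    using sums_mult[OF geometric_sums[of r], of r] r0 by (simp add: field_simps)
  have rb: "r / (1 - r) \<le> 2 / L"
  proof -
    have "1 + L/2 \<le> exp (L/2)" using exp_half_ge[of L] L by simp
    then have "r * (1 + L/2) \<le> r * exp (L/2)" using r0 by simp
    also have "r * exp (L/2) = 1" by (simp add: r_def exp_add[symmetric])
    finally have "r * (1 + L/2) \<le> 1" .
    then show ?thesis using r0 L by (simp add: field_simps)
  qed
  have sumg: "summable (\<lambda>n. (C * L^4 / 6) * r ^ Suc n)"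
    using geo by (rule summable_mult)
  have sumR: "summable R"
    by (rule summable_comparison_test[OF _ sumg]) (use Rb in auto)
  have sg: "suminf (\<lambda>n. (C * L^4 / 6) * r ^ Suc n) = (C * L^4 / 6) * (r / (1 - r))"
    using sums_unique[OF sums_mult[OF geo2, of "C * L^4 / 6"]] by simp
  have "suminf R \<le> suminf (\<lambda>n. (C * L^4 / 6) * r ^ Suc n)"
    by (rule suminf_le[OF abs_le_D1[OF Rb] sumR sumg])
  moreover have "- suminf R \<le> suminf (\<lambda>n. (C * L^4 / 6) * r ^ Suc n)"
  proof -
    have "suminf (\<lambda>n. - R n) \<le> suminf (\<lambda>n. (C * L^4 / 6) * r ^ Suc n)"
      by (rule suminf_le[OF abs_le_D2[OF Rb] summable_minus[OF sumR] sumg])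
    then show ?thesis using suminf_minus[OF sumR] by simp
  qed
  ultimately have "\<bar>suminf R\<bar> \<le> (C * L^4 / 6) * (r / (1 - r))" unfolding sg by linarith
  also have "\<dots> \<le> (C * L^4 / 6) * (2 / L)"
    using rb C0 L by (intro mult_left_mono) auto
  also have "\<dots> = C * L^3 / 3" using L by (simp add: field_simps power_numeral_reduce)
  finally have SRb: "\<bar>suminf R\<bar> \<le> C * L^3 / 3" .
  have c2_eq: "c2 q = - ((1-q)/(q*L)) * suminf s1 + ((1-q)/q) * suminf s2 + 1/L - 1/(1-q) - q/(1-q)"
    unfolding c2_def Let_def lnQ s1_def s2_def by simp
  have A0: "A 0 = ps0 L" "B 0 = ps1 L" "D 0 = ps2 L" by (simp_all add: A_def B_def D_def t_def)
  have Eapp_eq: "Eapp q = -((1-q)/(q*L^2)) * (- A 0 + (L/2) * B 0 - (L^2/12) * D 0)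
            + 1/L - 1/(1-q) - q/(1-q)"
    unfolding Eapp_def Let_def A0 L_def[symmetric] ..
  have c2G: "c2 q = - ((1-q)/(q*L)) * G + 1/L - 1/(1-q) - q/(1-q)"
    unfolding c2_eq G_eq using L q0 by (simp add: field_simps)
  define X where "X = - A 0 + (L/2) * B 0 - (L^2/12) * D 0"
  define K where "K = (1-q)/(q*L^2)"
  define rest where "rest = 1/L - 1/(1-q) - q/(1-q)"
  have GL: "L * G = X - suminf R" using SR unfolding X_def by (simp add: algebra_simps)
  have k: "(1-q)/(q*L) = K * L" using L by (simp add: K_def power2_eq_square)
  have "c2 q = - ((1-q)/(q*L)) * G + rest" using c2G unfolding rest_def by linarith
  then have c2K: "c2 q = - (K * L) * G + rest" unfolding k .
  have EK: "Eapp q = - K * X + rest" unfolding Eapp_eq K_def X_def rest_def by linarith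
  have "c2 q - Eapp q = K * (X - L * G)" unfolding c2K EK by (simp add: algebra_simps)
  also have "\<dots> = K * suminf R" using GL by simp
  finally have "c2 q - Eapp q = ((1-q)/(q*L^2)) * suminf R" unfolding K_def .
  then have "\<bar>c2 q - Eapp q\<bar> = ((1-q)/(q*L^2)) * \<bar>suminf R\<bar>"
    using q L by (simp add: abs_mult)
  also have "\<dots> \<le> ((1-q)/(q*L^2)) * (C * L^3 / 3)"
    using SRb q L by (intro mult_left_mono) auto
  also have "\<dots> = C * (1 - q) * L / (3 * q)"
    using L q0 by (simp add: field_simps power2_eq_square power3_eq_cube)
  also have "\<dots> \<le> C * L * L / (3 * q)"
    using qL C0 L q0 by (intro divide_right_mono mult_right_mono mult_left_mono) auto
  also have "\<dots> \<le> C * L * L * 2 / 3"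
  proof -
    have "1 / q \<le> 2" using q by (simp add: field_simps)
    then have "C * L * L * (1/q) \<le> C * L * L * 2" using C0 L by (intro mult_left_mono) auto
    then show ?thesis by (simp add: field_simps)
  qed
  also have "\<dots> = (2*C/3) * (ln q)\<^sup>2" by (simp add: L_def power2_eq_square)
  finally show ?thesis .
qed

theorem mainTheorem8:
  shows "(\<lambda>q. c2 q - (1/4 + (1/9) * ln q)) \<in> O[at_left 1](\<lambda>q. (ln q)\<^sup>2)
         \<and> (c2 \<longlongrightarrow> 1/4) (at_left 1)"
proof -
  obtain C where C: "\<forall>t>0. \<bar>ps4 t\<bar> \<le> C * exp (-t/2)" using ps4_bound by blast
  have ev0: "eventually (\<lambda>q. q \<in> {1/2<..<1}) (at_left (1::real))"
    by (rule eventually_at_left_real) simp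
  have ev: "eventually (\<lambda>q. norm (c2 q - Eapp q) \<le> (2*C/3) * (ln q)\<^sup>2) (at_left 1)"
  proof (rule eventually_mono[OF ev0])
    fix q :: real assume "q \<in> {1/2<..<1}"
    then have "1/2 < q" "q < 1" by auto
    from main_decomp[OF this C] show "norm (c2 q - Eapp q) \<le> (2*C/3) * (ln q)\<^sup>2" by simp
  qed
  have big: "(\<lambda>q. c2 q - Eapp q) \<in> O[at_left 1](\<lambda>q. (ln q)\<^sup>2)"
    by (rule bigoI[where c = "2*C/3"]) (use ev in \<open>eventually_elim, simp\<close>)
  have eq: "(\<lambda>q. c2 q - (1/4 + (1/9) * ln q)) = (\<lambda>q. (Eapp q - (1/4 + (1/9) * ln q)) + (c2 q - Eapp q))"
    by auto
  have P1: "(\<lambda>q. c2 q - (1/4 + (1/9) * ln q)) \<in> O[at_left 1](\<lambda>q. (ln q)\<^sup>2)"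
    unfolding eq by (rule sum_in_bigo(1)[OF Eapp_bigo big])
  have g0: "((\<lambda>q. (2*C/3) * (ln q)\<^sup>2) \<longlongrightarrow> 0) (at_left 1)"
    using tendsto_mult[OF tendsto_const[of "2*C/3"] lnsq_lim] by simp
  have lim0: "((\<lambda>q. c2 q - Eapp q) \<longlongrightarrow> 0) (at_left 1)"
    by (rule Lim_null_comparison[OF ev g0])
  have "((\<lambda>q. Eapp q + (c2 q - Eapp q)) \<longlongrightarrow> 1/4 + 0) (at_left 1)"
    by (rule tendsto_add[OF Eapp_lim lim0])
  then have P2: "(c2 \<longlongrightarrow> 1/4) (at_left 1)" by simp
  show ?thesis using P1 P2 by blast
qed

end
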